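(* Let $\rho$ be a probability distribution on $\mathbb N_0$ with finite second moment and let $\mathcal T\sim\mathrm{UGW}(\rho)$. Then for every non-decreasing family of positive constants $(C_{k,T})$ and every finite measure $\varsigma$ on $\mathcal J$, $\mathcal T$ is a.s. finitely dissociable.
   Context: $\mathrm{UGW}(\rho)$ (unimodular Galton–Watson tree) is the random rooted tree in which the root has a $\rho$-distributed number of children and, for each $k\ge0$, conditionally on the first $k$ generations, the vertices of generation $k\ge1$ have i.i.d. numbers of children with law $\hat\rho$, where $\hat\rho_k=(k+1)\rho_{k+1}/\sum_n n\rho_n$, $k\in\mathbb N_0$. Finite dissociability. Fix a countable set $\mathcal J$, a finite measure $\varsigma$ on $\mathcal J$ with $\varsigma(\mathcal J)>0$, and constants $C_{k,T}\in(0,\infty)$, $k\in\mathbb N$, $T\in\mathbb R_+$, non-decreasing in each index. For a vertex $v$ of a graph $G$ let $\mathrm{cl}_v$ denote $v$ together with its neighbours. A deterministic locally finite graph $G$ is finitely dissociable if for every $T\in(0,\infty)$ there is $\Delta\in(0,T]$ such that the following holds: if $(N_v)_{v\in V_G}$ are i.i.d. Poisson random measures on $\mathbb R_+^2\times\mathcal J$ with intensity $\mathrm{Leb}^2\otimes\varsigma$ and a vertex $v$ is called active when $N_v((0,\Delta]\times(0,C_{|\mathrm{cl}_v|,T}]\times\mathcal J)>0$, then a.s. every connected component of the subgraph of $G$ induced by the active vertices is finite. A random graph is a.s. finitely dissociable if its realization is finitely dissociable almost surely. *)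

theory Defs
  imports "HOL-Probability.Probability"
begin

text \<open>A graph is given by a vertex set V and a symmetric adjacency relation E
  (only adjacencies between vertices of V are relevant).\<close>

definition nbhd :: "'v set \<Rightarrow> ('v \<Rightarrow> 'v \<Rightarrow> bool) \<Rightarrow> 'v \<Rightarrow> 'v set" where
  "nbhd V E v = {u \<in> V. E v u}"

definition cl :: "'v set \<Rightarrow> ('v \<Rightarrow> 'v \<Rightarrow> bool) \<Rightarrow> 'v \<Rightarrow> 'v set" where
  "cl V E v = insert v (nbhd V E v)"

definition locally_finite :: "'v set \<Rightarrow> ('v \<Rightarrow> 'v \<Rightarrow> bool) \<Rightarrow> bool" where
  "locally_finite V E \<longleftrightarrow> (\<forall>v\<in>V. finite (nbhd V E v))"

definition induced_edges :: "'v set \<Rightarrow> ('v \<Rightarrow> 'v \<Rightarrow> bool) \<Rightarrow> 'v set \<Rightarrow> ('v \<times> 'v) set" where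
  "induced_edges V E W = {(a, b). a \<in> V \<and> b \<in> V \<and> a \<in> W \<and> b \<in> W \<and> E a b}"

definition all_components_finite :: "'v set \<Rightarrow> ('v \<Rightarrow> 'v \<Rightarrow> bool) \<Rightarrow> 'v set \<Rightarrow> bool" where
  "all_components_finite V E W \<longleftrightarrow>
     (\<forall>w \<in> V \<inter> W. finite {u. (w, u) \<in> (induced_edges V E W)\<^sup>*})"

definition poisson_random_measure ::
    "'w measure \<Rightarrow> 'a measure \<Rightarrow> ('w \<Rightarrow> 'a set \<Rightarrow> ennreal) \<Rightarrow> bool" where
  "poisson_random_measure M \<mu> N \<longleftrightarrow>
     prob_space M \<and>
     (\<forall>\<omega>\<in>space M. measure_space (space \<mu>) (sets \<mu>) (N \<omega>)) \<and>
     (\<forall>A\<in>sets \<mu>. (\<lambda>\<omega>. N \<omega> A) \<in> borel_measurable M) \<and>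
     (\<forall>A\<in>sets \<mu>. emeasure \<mu> A < \<infinity> \<longrightarrow>
        (\<forall>n::nat. measure M {\<omega>\<in>space M. N \<omega> A = of_nat n}
           = (enn2real (emeasure \<mu> A)) ^ n / fact n * exp (- enn2real (emeasure \<mu> A)))) \<and>
     (\<forall>(I :: nat set) A. finite I \<longrightarrow> disjoint_family_on A I \<longrightarrow>
        (\<forall>i\<in>I. A i \<in> sets \<mu> \<and> emeasure \<mu> (A i) < \<infinity>) \<longrightarrow>
        prob_space.indep_vars M (\<lambda>_. borel) (\<lambda>i \<omega>. N \<omega> (A i)) I)"

text \<open>A family (N_v)_{v in V} of i.i.d. Poisson random measures with intensity mu:
  each is a PRM with intensity mu (this fixes the common law) and the random measures
  (viewed as families of counts indexed by the measurable sets, with the product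
  sigma-algebra) are mutually independent.\<close>
definition iid_PRMs ::
    "'w measure \<Rightarrow> 'a measure \<Rightarrow> 'v set \<Rightarrow> ('v \<Rightarrow> 'w \<Rightarrow> 'a set \<Rightarrow> ennreal) \<Rightarrow> bool" where
  "iid_PRMs M \<mu> V N \<longleftrightarrow>
     prob_space M \<and>
     (\<forall>v\<in>V. poisson_random_measure M \<mu> (N v)) \<and>
     prob_space.indep_vars M (\<lambda>_. Pi\<^sub>M (sets \<mu>) (\<lambda>_. (borel :: ennreal measure)))
        (\<lambda>v \<omega>. restrict (N v \<omega>) (sets \<mu>)) V"

definition intensity :: "'j measure \<Rightarrow> ((real \<times> real) \<times> 'j) measure" where
  "intensity \<sigma> =
     restrict_space (lborel \<Otimes>\<^sub>M lborel) ({0::real..} \<times> {0::real..}) \<Otimes>\<^sub>M \<sigma>"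

definition admissible_params ::
    "'j set \<Rightarrow> 'j measure \<Rightarrow> (nat \<Rightarrow> real \<Rightarrow> real) \<Rightarrow> bool" where
  "admissible_params J \<sigma> C \<longleftrightarrow>
     countable J \<and> space \<sigma> = J \<and> sets \<sigma> = Pow J \<and> finite_measure \<sigma> \<and>
     emeasure \<sigma> J > 0 \<and>
     (\<forall>k T. 1 \<le> k \<longrightarrow> 0 \<le> T \<longrightarrow> 0 < C k T) \<and>
     (\<forall>k k' T. 1 \<le> k \<longrightarrow> k \<le> k' \<longrightarrow> 0 \<le> T \<longrightarrow> C k T \<le> C k' T) \<and>
     (\<forall>k T T'. 1 \<le> k \<longrightarrow> 0 \<le> T \<longrightarrow> T \<le> T' \<longrightarrow> C k T \<le> C k T')"

definition active_set ::
    "'v set \<Rightarrow> ('v \<Rightarrow> 'v \<Rightarrow> bool) \<Rightarrow> 'j set \<Rightarrow> (nat \<Rightarrow> real \<Rightarrow> real) \<Rightarrow> real \<Rightarrow> real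
      \<Rightarrow> ('v \<Rightarrow> ((real \<times> real) \<times> 'j) set \<Rightarrow> ennreal) \<Rightarrow> 'v set" where
  "active_set V E J C T \<Delta> Nw =
     {v \<in> V. Nw v (({0<..\<Delta>} \<times> {0<..C (card (cl V E v)) T}) \<times> J) > 0}"

text \<open>Finite dissociability of a deterministic locally finite graph (V, E). The i.i.d.
  Poisson random measures live on an arbitrary probability space M of type 'w.\<close>
definition finitely_dissociable ::
    "'w itself \<Rightarrow> 'j set \<Rightarrow> 'j measure \<Rightarrow> (nat \<Rightarrow> real \<Rightarrow> real)
      \<Rightarrow> 'v set \<Rightarrow> ('v \<Rightarrow> 'v \<Rightarrow> bool) \<Rightarrow> bool" where
  "finitely_dissociable (_ :: 'w itself) J \<sigma> C V E \<longleftrightarrow>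
     locally_finite V E \<and>
     (\<forall>T>0. \<exists>\<Delta>. 0 < \<Delta> \<and> \<Delta> \<le> T \<and>
        (\<forall>(M :: 'w measure) N. iid_PRMs M (intensity \<sigma>) V N \<longrightarrow>
           (AE \<omega> in M. all_components_finite V E
              (active_set V E J C T \<Delta> (\<lambda>v. N v \<omega>)))))"

text \<open>Convention: if the mean is 0 (rho = delta_0, so the tree is a single root and hat rho is
  never used) hat rho is taken to be delta_0.\<close>
definition pmf_mean :: "nat pmf \<Rightarrow> real" where
  "pmf_mean \<rho> = (\<Sum>n. real n * pmf \<rho> n)"

definition hat_rho :: "nat pmf \<Rightarrow> nat \<Rightarrow> real" where
  "hat_rho \<rho> k =
     (if pmf_mean \<rho> = 0 then (if k = 0 then 1 else 0)
      else real (k + 1) * pmf \<rho> (k + 1) / pmf_mean \<rho>)"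

text \<open>Ulam--Harris encoding: given offspring numbers K v for every label v :: nat list,
  the tree has root [] and the children of a vertex v are v @ [i], i < K v.\<close>
inductive_set gw_vertices :: "(nat list \<Rightarrow> nat) \<Rightarrow> nat list set" for K where
  root: "[] \<in> gw_vertices K"
| child: "v \<in> gw_vertices K \<Longrightarrow> i < K v \<Longrightarrow> v @ [i] \<in> gw_vertices K"

definition tree_adj :: "nat list \<Rightarrow> nat list \<Rightarrow> bool" where
  "tree_adj u w \<longleftrightarrow> (\<exists>i. w = u @ [i]) \<or> (\<exists>i. u = w @ [i])"

text \<open>K is a family of offspring numbers realising T ~ UGW(rho) on the probability
  space P: the K v are independent, K [] has law rho, all other K v have law hat rho.
  (This is the standard construction of the law described in the paper.)\<close>
definition UGW_offspring :: "'p measure \<Rightarrow> nat pmf \<Rightarrow> (nat list \<Rightarrow> 'p \<Rightarrow> nat) \<Rightarrow> bool" where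
  "UGW_offspring P \<rho> K \<longleftrightarrow>
     prob_space P \<and>
     (\<forall>v. K v \<in> measurable P (count_space UNIV)) \<and>
     prob_space.indep_vars P (\<lambda>_. count_space UNIV) K UNIV \<and>
     (\<forall>k. measure P {\<omega>\<in>space P. K [] \<omega> = k} = pmf \<rho> k) \<and>
     (\<forall>v k. v \<noteq> [] \<longrightarrow> measure P {\<omega>\<in>space P. K v \<omega> = k} = hat_rho \<rho> k)"

end

theory Submission
  imports Defs
begin

lemma gw_snoc_inv:
  assumes "v @ [i] \<in> gw_vertices \<kappa>"
  shows "v \<in> gw_vertices \<kappa> \<and> i < \<kappa> v"
  using assms by (cases rule: gw_vertices.cases) auto

lemma gw_prefix: "v @ ys \<in> gw_vertices \<kappa> \<Longrightarrow> v \<in> gw_vertices \<kappa>"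
proof (induction ys rule: rev_induct)
  case Nil then show ?case by simp
next
  case (snoc y ys) then show ?case using gw_snoc_inv[of "v @ ys" y \<kappa>] by simp
qed

lemma nbhd_sub:
  assumes "u \<in> gw_vertices \<kappa>"
  shows "nbhd (gw_vertices \<kappa>) tree_adj u \<subseteq> (\<lambda>i. u @ [i]) ` {..<\<kappa> u} \<union> {butlast u}"
proof
  fix w assume "w \<in> nbhd (gw_vertices \<kappa>) tree_adj u"
  then have w: "w \<in> gw_vertices \<kappa>" "tree_adj u w" by (auto simp: nbhd_def)
  then consider i where "w = u @ [i]" | i where "u = w @ [i]" by (auto simp: tree_adj_def)
  then show "w \<in> (\<lambda>i. u @ [i]) ` {..<\<kappa> u} \<union> {butlast u}"
  proof cases
    case (1 i) then show ?thesis using gw_snoc_inv[of u i \<kappa>] w by auto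
  next
    case (2 i) then show ?thesis by simp
  qed
qed

lemma nbhd_finite: "u \<in> gw_vertices \<kappa> \<Longrightarrow> finite (nbhd (gw_vertices \<kappa>) tree_adj u)"
  using nbhd_sub finite_subset by (metis finite.emptyI finite.insertI finite_Un finite_imageI finite_lessThan)

lemma gw_locally_finite: "locally_finite (gw_vertices \<kappa>) tree_adj"
  using nbhd_finite by (auto simp: locally_finite_def)

lemma card_cl_le:
  assumes "u \<in> gw_vertices \<kappa>"
  shows "card (cl (gw_vertices \<kappa>) tree_adj u) \<le> \<kappa> u + 2"
proof -
  have "card (cl (gw_vertices \<kappa>) tree_adj u) \<le> card (insert u ((\<lambda>i. u @ [i]) ` {..<\<kappa> u} \<union> {butlast u}))"
    unfolding cl_def using nbhd_sub[OF assms] by (intro card_mono) auto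
  also have "\<dots> \<le> Suc (card ((\<lambda>i. u @ [i]) ` {..<\<kappa> u} \<union> {butlast u}))"
    by (rule card_insert_le_m1) auto
  also have "card ((\<lambda>i. u @ [i]) ` {..<\<kappa> u} \<union> {butlast u}) \<le> card ((\<lambda>i. u @ [i]) ` {..<\<kappa> u}) + card {butlast u}"
    by (rule card_Un_le)
  also have "card ((\<lambda>i. u @ [i]) ` {..<\<kappa> u}) \<le> \<kappa> u"
    using card_image_le[of "{..<\<kappa> u}" "\<lambda>i. u @ [i]"] by simp
  finally show ?thesis by simp
qed

lemma card_cl_ge:
  assumes "u \<in> gw_vertices \<kappa>"
  shows "1 \<le> card (cl (gw_vertices \<kappa>) tree_adj u)"
proof -
  have "finite (cl (gw_vertices \<kappa>) tree_adj u)" using nbhd_finite[OF assms] by (simp add: cl_def)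
  then show ?thesis by (simp add: cl_def Suc_le_eq card_gt_0_iff)
qed

lemma gw_bounded_finite: "finite {u \<in> gw_vertices \<kappa>. length u \<le> L}"
proof (induction L)
  case 0
  have "{u \<in> gw_vertices \<kappa>. length u \<le> 0} \<subseteq> {[]}" by auto
  then show ?case using finite_subset by blast
next
  case (Suc L)
  let ?S = "{u \<in> gw_vertices \<kappa>. length u \<le> L}"
  have "{u \<in> gw_vertices \<kappa>. length u \<le> Suc L} \<subseteq> ?S \<union> (\<Union>v\<in>?S. (\<lambda>i. v @ [i]) ` {..<\<kappa> v})"
  proof
    fix u assume u: "u \<in> {u \<in> gw_vertices \<kappa>. length u \<le> Suc L}"
    show "u \<in> ?S \<union> (\<Union>v\<in>?S. (\<lambda>i. v @ [i]) ` {..<\<kappa> v})"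
    proof (cases "length u \<le> L")
      case True with u show ?thesis by auto
    next
      case False
      then have "u \<noteq> []" by auto
      then obtain v i where vi: "u = v @ [i]" by (metis rev_exhaust)
      with u gw_snoc_inv[of v i \<kappa>] False show ?thesis by auto
    qed
  qed
  moreover have "finite (?S \<union> (\<Union>v\<in>?S. (\<lambda>i. v @ [i]) ` {..<\<kappa> v}))"
    using Suc by auto
  ultimately show ?case using finite_subset by blast
qed

lemma comp_inv:
  assumes WV: "W \<subseteq> V" and w: "w \<in> W" and r: "(w,u) \<in> (induced_edges V tree_adj W)\<^sup>*"
  shows "\<exists>j xs. j \<le> length w \<and> u = take j w @ xs \<and> (\<forall>k\<le>length xs. take j w @ take k xs \<in> W)"
  using r
proof (induction rule: rtrancl_induct)
  case base
  show ?case by (rule exI[of _ "length w"], rule exI[of _ "[]"]) (simp add: w)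
next
  case (step u u')
  from step.IH obtain j xs where j: "j \<le> length w" and u: "u = take j w @ xs"
    and P: "\<forall>k\<le>length xs. take j w @ take k xs \<in> W" by blast
  from step.hyps(2) have uW: "u \<in> W" and u'W: "u' \<in> W" and adj: "tree_adj u u'"
    by (auto simp: induced_edges_def)
  from adj consider i where "u' = u @ [i]" | i where "u = u' @ [i]" by (auto simp: tree_adj_def)
  then show ?case
  proof cases
    case (1 i)
    show ?thesis
    proof (intro exI conjI)
      show "j \<le> length w" by fact
      show "u' = take j w @ (xs @ [i])" using 1 u by simp
      show "\<forall>k\<le>length (xs @ [i]). take j w @ take k (xs @ [i]) \<in> W"
      proof (intro allI impI)
        fix k assume k: "k \<le> length (xs @ [i])"
        show "take j w @ take k (xs @ [i]) \<in> W"
        proof (cases "k \<le> length xs")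
          case True then show ?thesis using P by simp
        next
          case False then have "k = Suc (length xs)" using k by simp
          then show ?thesis using u'W 1 u by simp
        qed
      qed
    qed
  next
    case (2 i)
    show ?thesis
    proof (cases "xs = []")
      case True
      then have uj: "u = take j w" using u by simp
      then have "j \<noteq> 0" using 2 by (metis Nil_is_append_conv not_Cons_self2 take0)
      have "u' = take (j - 1) w" using 2 uj \<open>j \<noteq> 0\<close> j
        by (metis butlast_snoc butlast_take)
      then show ?thesis using j u'W
        by (intro exI[of _ "j - 1"] exI[of _ "[]"]) auto
    next
      case False
      then obtain ys y where xs: "xs = ys @ [y]" by (metis rev_exhaust)
      then have u'eq: "u' = take j w @ ys" using 2 u by simp
      show ?thesis
      proof (intro exI conjI)
        show "j \<le> length w" by fact
        show "u' = take j w @ ys" by fact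
        show "\<forall>k\<le>length ys. take j w @ take k ys \<in> W"
        proof (intro allI impI)
          fix k assume "k \<le> length ys"
          then have "take k ys = take k xs" "k \<le> length xs" using xs by auto
          then show "take j w @ take k ys \<in> W" using P by metis
        qed
      qed
    qed
  qed
qed

lemma comp_finite:
  assumes WV: "W \<subseteq> gw_vertices \<kappa>"
    and crit: "\<forall>a\<in>gw_vertices \<kappa>. \<exists>n. \<not>(\<exists>xs. length xs = n \<and> (\<forall>k<n. a @ take (Suc k) xs \<in> W))"
  shows "all_components_finite (gw_vertices \<kappa>) tree_adj W"
  unfolding all_components_finite_def
proof
  fix w assume "w \<in> gw_vertices \<kappa> \<inter> W"
  then have w: "w \<in> W" by auto
  define V where "V = gw_vertices \<kappa>"
  from crit obtain nf where nf: "\<And>a. a \<in> V \<Longrightarrow> \<not>(\<exists>xs. length xs = nf a \<and> (\<forall>k<nf a. a @ take (Suc k) xs \<in> W))"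
    unfolding V_def by metis
  define B where "B = Max ((\<lambda>j. nf (take j w)) ` {..length w})"
  have sub: "{u. (w, u) \<in> (induced_edges V tree_adj W)\<^sup>*} \<subseteq> {u \<in> V. length u \<le> length w + B}"
  proof
    fix u assume "u \<in> {u. (w, u) \<in> (induced_edges V tree_adj W)\<^sup>*}"
    then obtain j xs where j: "j \<le> length w" and u: "u = take j w @ xs"
      and P: "\<forall>k\<le>length xs. take j w @ take k xs \<in> W"
      using comp_inv[OF _ w, of V u] WV unfolding V_def by auto
    have uV: "u \<in> V" using P u WV V_def by (metis order_refl subsetD take_all)
    have aV: "take j w \<in> V" using P WV V_def by (metis append_Nil2 subsetD take0 zero_le)
    have "length xs < nf (take j w)"
    proof (rule ccontr)
      assume "\<not> length xs < nf (take j w)"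
      then have "\<forall>k<nf (take j w). take j w @ take (Suc k) (take (nf (take j w)) xs) \<in> W"
        using P by (auto simp: min_def)
      then show False using nf[OF aV] \<open>\<not> length xs < nf (take j w)\<close>
        by (metis (no_types, lifting) length_take min.absorb2 not_le_imp_less less_imp_le)
    qed
    moreover have "nf (take j w) \<le> B" unfolding B_def using j by (intro Max_ge) auto
    ultimately show "u \<in> {u \<in> V. length u \<le> length w + B}" using u uV by auto
  qed
  show "finite {u. (w, u) \<in> (induced_edges (gw_vertices \<kappa>) tree_adj W)\<^sup>*}"
    using finite_subset[OF sub] gw_bounded_finite V_def by simp
qed

fun PS :: "nat \<Rightarrow> (nat list \<Rightarrow> ennreal) \<Rightarrow> ennreal" where
  "PS 0 g = g []"
| "PS (Suc n) g = (\<Sum>i. PS n (\<lambda>ys. g (i # ys)))"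

fun Fq :: "(nat \<Rightarrow> ennreal) \<Rightarrow> nat \<Rightarrow> nat list \<Rightarrow> (nat list \<Rightarrow> nat) \<Rightarrow> ennreal" where
  "Fq q 0 u \<kappa> = 1"
| "Fq q (Suc n) u \<kappa> = (\<Sum>i. (if i < \<kappa> u then 1 else 0) * (q (\<kappa> (u @ [i])) * Fq q n (u @ [i]) \<kappa>))"

lemma PS_cmult: "PS n (\<lambda>xs. c * g xs) = c * PS n g"
  by (induction n arbitrary: g) auto

lemma PS_mono: "(\<And>xs. length xs = n \<Longrightarrow> g xs \<le> h xs) \<Longrightarrow> PS n g \<le> PS n h"
proof (induction n arbitrary: g h)
  case 0 then show ?case by simp
next
  case (Suc n)
  show ?case unfolding PS.simps
    by (intro suminf_le summableI Suc.IH) (use Suc.prems in auto)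
qed

lemma countable_len: "countable {xs :: nat list. length xs = n}"
  by (rule countable_subset[of _ UNIV]) auto

lemma PS_union:
  assumes "\<And>xs. B xs \<in> sets M"
  shows "emeasure M (\<Union>xs\<in>{xs. length xs = n}. B xs) \<le> PS n (\<lambda>xs. emeasure M (B xs))"
  using assms
proof (induction n arbitrary: B)
  case 0
  have "{xs :: nat list. length xs = 0} = {[]}" by auto
  then show ?case by simp
next
  case (Suc n)
  have eq: "(\<Union>xs\<in>{xs. length xs = Suc n}. B xs) = (\<Union>i. \<Union>ys\<in>{ys. length ys = n}. B (i # ys))"
    by (auto simp: length_Suc_conv)
  have meas: "(\<Union>ys\<in>{ys. length ys = n}. B (i # ys)) \<in> sets M" for i
    by (intro sets.countable_UN' countable_len) (use Suc.prems in auto)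
  have "emeasure M (\<Union>xs\<in>{xs. length xs = Suc n}. B xs)
      \<le> (\<Sum>i. emeasure M (\<Union>ys\<in>{ys. length ys = n}. B (i # ys)))"
    unfolding eq by (rule emeasure_subadditive_countably) (use meas in auto)
  also have "\<dots> \<le> (\<Sum>i. PS n (\<lambda>ys. emeasure M (B (i # ys))))"
    by (intro suminf_le summableI Suc.IH Suc.prems)
  finally show ?case by simp
qed

lemma PS_Fq:
  fixes \<kappa> :: "nat list \<Rightarrow> nat" and q :: "nat \<Rightarrow> ennreal"
  defines "h \<equiv> \<lambda>u. if u \<in> gw_vertices \<kappa> then q (\<kappa> u) else 0"
  shows "PS n (\<lambda>xs. \<Prod>k<n. h (v @ take (Suc k) xs)) \<le> Fq q n v \<kappa>"
proof (induction n arbitrary: v)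
  case 0 then show ?case by simp
next
  case (Suc n)
  have eq: "(\<Prod>k<Suc n. h (v @ take (Suc k) (i # ys))) = h (v @ [i]) * (\<Prod>k<n. h ((v @ [i]) @ take (Suc k) ys))"
    for i ys
    by (subst prod.lessThan_Suc_shift) simp
  have "PS (Suc n) (\<lambda>xs. \<Prod>k<Suc n. h (v @ take (Suc k) xs))
       = (\<Sum>i. h (v @ [i]) * PS n (\<lambda>ys. \<Prod>k<n. h ((v @ [i]) @ take (Suc k) ys)))"
    by (simp only: PS.simps eq PS_cmult)
  also have "\<dots> \<le> (\<Sum>i. (if i < \<kappa> v then 1 else 0) * (q (\<kappa> (v @ [i])) * Fq q n (v @ [i]) \<kappa>))"
  proof (intro suminf_le summableI)
    fix i
    show "h (v @ [i]) * PS n (\<lambda>ys. \<Prod>k<n. h ((v @ [i]) @ take (Suc k) ys))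
        \<le> (if i < \<kappa> v then 1 else 0) * (q (\<kappa> (v @ [i])) * Fq q n (v @ [i]) \<kappa>)"
    proof (cases "v @ [i] \<in> gw_vertices \<kappa>")
      case True
      then have "i < \<kappa> v" using gw_snoc_inv by blast
      then show ?thesis using True Suc.IH[of "v @ [i]"] by (simp add: h_def mult_left_mono)
    next
      case False then show ?thesis by (simp add: h_def)
    qed
  qed
  finally show ?case by simp
qed

lemma inj_path: "inj_on (\<lambda>k. v @ take (Suc k) xs) {..<length xs}"
proof (rule inj_onI)
  fix a b assume "a \<in> {..<length xs}" "b \<in> {..<length xs}" "v @ take (Suc a) xs = v @ take (Suc b) xs"
  then have "length (take (Suc a) xs) = length (take (Suc b) xs)" by simp
  with \<open>a \<in> _\<close> \<open>b \<in> _\<close> show "a = b" by auto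
qed

lemma suminf_const_top: assumes "(c::ennreal) \<noteq> 0" shows "(\<Sum>n::nat. c) = \<infinity>"
proof (rule ccontr)
  assume ne: "(\<Sum>n::nat. c) \<noteq> \<infinity>"
  have le: "of_nat N * c \<le> (\<Sum>n::nat. c)" for N
  proof -
    have "(\<Sum>n<N. c) \<le> (\<Sum>n::nat. c)" by (rule sum_le_suminf) auto
    then show ?thesis by simp
  qed
  obtain s where s: "(\<Sum>n::nat. c) = ennreal s" "0 \<le> s" using ne by (cases "(\<Sum>n::nat. c)") auto
  have "c \<le> ennreal s" using le[of 1] s by simp
  then obtain r where r: "c = ennreal r" "0 \<le> r" by (cases c) (auto simp: top_unique)
  then have rpos: "r > 0" using assms by (auto simp: less_le)
  obtain N :: nat where N: "s / r < N" using reals_Archimedean2 by blast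
  have "ennreal (N * r) \<le> ennreal s" using le[of N] s r by (simp add: ennreal_mult ennreal_of_nat_eq_real_of_nat)
  then have "N * r \<le> s" using s(2) by (simp add: ennreal_le_iff)
  with N rpos show False by (simp add: field_simps)
qed

lemma quenched:
  fixes M :: "'w measure" and \<mu> :: "'a measure"
    and N :: "nat list \<Rightarrow> 'w \<Rightarrow> 'a set \<Rightarrow> ennreal"
    and box :: "nat list \<Rightarrow> 'a set" and \<kappa> :: "nat list \<Rightarrow> nat" and q :: "nat \<Rightarrow> ennreal"
  assumes iid: "iid_PRMs M \<mu> (gw_vertices \<kappa>) N"
    and boxes: "\<And>u. u \<in> gw_vertices \<kappa> \<Longrightarrow> box u \<in> sets \<mu> \<and> emeasure \<mu> (box u) < \<infinity>"
    and qb: "\<And>u. u \<in> gw_vertices \<kappa> \<Longrightarrow> ennreal (1 - exp (- enn2real (emeasure \<mu> (box u)))) \<le> q (\<kappa> u)"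
    and fin: "\<And>v. (\<Sum>n. Fq q n v \<kappa>) < \<infinity>"
  shows "AE \<omega> in M. \<forall>v. \<exists>n. \<not>(\<exists>xs. length xs = n \<and> (\<forall>k<n. v @ take (Suc k) xs \<in> gw_vertices \<kappa> \<and> 0 < N (v @ take (Suc k) xs) \<omega> (box (v @ take (Suc k) xs))))"
proof -
  define V where "V = gw_vertices \<kappa>"
  interpret prob_space M using iid by (simp add: iid_PRMs_def)
  have prm: "\<And>u. u \<in> V \<Longrightarrow> poisson_random_measure M \<mu> (N u)" using iid by (simp add: iid_PRMs_def V_def)
  define X where "X = (\<lambda>u \<omega>. restrict (N u \<omega>) (sets \<mu>))"
  have ind: "indep_vars (\<lambda>_. Pi\<^sub>M (sets \<mu>) (\<lambda>_. (borel :: ennreal measure))) X V"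
    using iid by (simp add: iid_PRMs_def V_def X_def)
  define A where "A u = {\<omega>\<in>space M. u \<in> V \<and> 0 < N u \<omega> (box u)}" for u
  have Nmeas: "(\<lambda>\<omega>. N u \<omega> (box u)) \<in> borel_measurable M" if "u \<in> V" for u
    using prm[OF that] boxes[of u] that by (auto simp: poisson_random_measure_def V_def)
  have A_ev: "A u \<in> events" for u
  proof (cases "u \<in> V")
    case True
    have "A u = {\<omega>\<in>space M. 0 < N u \<omega> (box u)}" using True by (auto simp: A_def)
    also have "\<dots> \<in> events" using Nmeas[OF True] by measurable
    finally show ?thesis .
  next
    case False then show ?thesis by (simp add: A_def)
  qed
  have probA: "prob (A u) = 1 - exp (- enn2real (emeasure \<mu> (box u)))" if u: "u \<in> V" for u
  proof -
    have "measure M {\<omega>\<in>space M. N u \<omega> (box u) = of_nat 0}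
        = (enn2real (emeasure \<mu> (box u))) ^ 0 / fact 0 * exp (- enn2real (emeasure \<mu> (box u)))"
      using prm[OF u] boxes[of u] u unfolding poisson_random_measure_def V_def by blast
    then have z: "prob {\<omega>\<in>space M. N u \<omega> (box u) = 0} = exp (- enn2real (emeasure \<mu> (box u)))" by simp
    have "A u = space M - {\<omega>\<in>space M. N u \<omega> (box u) = 0}" using u by (auto simp: A_def zero_less_iff_neq_zero)
    moreover have "{\<omega>\<in>space M. N u \<omega> (box u) = 0} \<in> events" using Nmeas[OF u] by measurable
    ultimately show ?thesis using z prob_compl by simp
  qed
  have indA: "prob (\<Inter>u\<in>S. A u) = (\<Prod>u\<in>S. prob (A u))" if S: "S \<subseteq> V" "S \<noteq> {}" "finite S" for S
  proof -
    have isx: "indep_sets (\<lambda>u. {X u -` D \<inter> space M | D. D \<in> sets (Pi\<^sub>M (sets \<mu>) (\<lambda>_. (borel :: ennreal measure)))}) V"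
      using ind unfolding indep_vars_def2 by blast
    show ?thesis
    proof (rule indep_setsD[OF isx S(1,2,3)], intro ballI)
      fix u assume "u \<in> S"
      then have u: "u \<in> V" using S by auto
      define D where "D = {f \<in> space (Pi\<^sub>M (sets \<mu>) (\<lambda>_. (borel :: ennreal measure))). 0 < f (box u)}"
      have bs: "box u \<in> sets \<mu>" using boxes u by (auto simp: V_def)
      have "D \<in> sets (Pi\<^sub>M (sets \<mu>) (\<lambda>_. (borel :: ennreal measure)))"
        unfolding D_def using measurable_component_singleton[OF bs, of "\<lambda>_. (borel :: ennreal measure)"]
        by measurable
      moreover have "A u = X u -` D \<inter> space M"
      proof -
        have "X u \<in> measurable M (Pi\<^sub>M (sets \<mu>) (\<lambda>_. (borel :: ennreal measure)))"
          using ind u unfolding indep_vars_def by blast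
        then have "\<And>x. x \<in> space M \<Longrightarrow> X u x \<in> space (Pi\<^sub>M (sets \<mu>) (\<lambda>_. (borel :: ennreal measure)))"
          by (rule measurable_space)
        then show ?thesis using u bs by (auto simp: A_def D_def X_def)
      qed
      ultimately show "A u \<in> {X u -` D \<inter> space M | D. D \<in> sets (Pi\<^sub>M (sets \<mu>) (\<lambda>_. (borel :: ennreal measure)))}"
        by blast
    qed
  qed
  define h where "h u = (if u \<in> gw_vertices \<kappa> then q (\<kappa> u) else 0)" for u
  define Bs where "Bs v xs = {\<omega>\<in>space M. \<forall>k<length xs. \<omega> \<in> A (v @ take (Suc k) xs)}" for v xs
  have Bs_ev: "Bs v xs \<in> events" for v xs
  proof -
    have "Bs v xs = space M \<inter> (\<Inter>k\<in>{..<length xs}. A (v @ take (Suc k) xs))"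
      by (auto simp: Bs_def)
    also have "\<dots> \<in> events" using A_ev by auto
    finally show ?thesis .
  qed
  have Bs_le: "emeasure M (Bs v xs) \<le> (\<Prod>k<length xs. h (v @ take (Suc k) xs))" for v xs
  proof (cases "\<forall>k<length xs. v @ take (Suc k) xs \<in> V")
    case False
    then obtain k where k: "k < length xs" "v @ take (Suc k) xs \<notin> V" by blast
    then have "Bs v xs = {}" by (auto simp: Bs_def A_def)
    then show ?thesis by simp
  next
    case allV: True
    show ?thesis
    proof (cases "xs = []")
      case True
      then show ?thesis by (simp add: Bs_def emeasure_space_1)
    next
      case False
      define S where "S = (\<lambda>k. v @ take (Suc k) xs) ` {..<length xs}"
      have SV: "S \<subseteq> V" using allV by (auto simp: S_def)
      have Sne: "S \<noteq> {}" using False by (auto simp: S_def)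
      have "Bs v xs = (\<Inter>u\<in>S. A u)"
        using False by (auto simp: Bs_def S_def A_def)
      then have "prob (Bs v xs) = (\<Prod>u\<in>S. prob (A u))" using indA[OF SV Sne] S_def by simp
      also have "\<dots> = (\<Prod>k<length xs. prob (A (v @ take (Suc k) xs)))"
        unfolding S_def by (rule prod.reindex[OF inj_path, unfolded comp_def])
      finally have "emeasure M (Bs v xs) = ennreal (\<Prod>k<length xs. prob (A (v @ take (Suc k) xs)))"
        by (simp add: emeasure_eq_measure)
      also have "\<dots> = (\<Prod>k<length xs. ennreal (prob (A (v @ take (Suc k) xs))))"
        by (rule prod_ennreal[symmetric]) simp
      also have "\<dots> \<le> (\<Prod>k<length xs. h (v @ take (Suc k) xs))"
      proof (rule prod_mono_ennreal)
        fix k assume "k \<in> {..<length xs}"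
        then have u: "v @ take (Suc k) xs \<in> V" using allV by auto
        show "ennreal (prob (A (v @ take (Suc k) xs))) \<le> h (v @ take (Suc k) xs)"
          using probA[OF u] qb[of "v @ take (Suc k) xs"] u by (simp add: h_def V_def)
      qed
      finally show ?thesis .
    qed
  qed
  define E where "E v n = (\<Union>xs\<in>{xs. length xs = n}. Bs v xs)" for v n
  have E_le: "emeasure M (E v n) \<le> Fq q n v \<kappa>" for v n
  proof -
    have "emeasure M (E v n) \<le> PS n (\<lambda>xs. emeasure M (Bs v xs))"
      unfolding E_def by (rule PS_union) (rule Bs_ev)
    also have "\<dots> \<le> PS n (\<lambda>xs. \<Prod>k<n. h (v @ take (Suc k) xs))"
      by (rule PS_mono) (use Bs_le in auto)
    also have "\<dots> \<le> Fq q n v \<kappa>" unfolding h_def by (rule PS_Fq)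
    finally show ?thesis .
  qed
  have E_ev: "E v n \<in> events" for v n
    unfolding E_def by (intro sets.countable_UN' countable_len) (use Bs_ev in auto)
  have null: "(\<Inter>n. E v n) \<in> null_sets M" for v
  proof -
    have ev: "(\<Inter>n. E v n) \<in> events" using E_ev by auto
    have le: "emeasure M (\<Inter>n. E v n) \<le> Fq q n v \<kappa>" for n
      by (rule order_trans[OF emeasure_mono E_le]) (use E_ev in auto)
    have "emeasure M (\<Inter>n. E v n) = 0"
    proof (rule ccontr)
      assume ne: "emeasure M (\<Inter>n. E v n) \<noteq> 0"
      have "(\<Sum>n. emeasure M (\<Inter>n. E v n)) \<le> (\<Sum>n. Fq q n v \<kappa>)"
        by (intro suminf_le summableI le)
      moreover have "(\<Sum>n::nat. emeasure M (\<Inter>n. E v n)) = \<infinity>"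
        using ne by (rule suminf_const_top) 
      ultimately show False using fin[of v] by (simp add: top_unique)
    qed
    then show ?thesis using ev by auto
  qed
  have "AE \<omega> in M. \<omega> \<notin> (\<Inter>n. E v n)" for v
    by (rule AE_I'[OF null]) auto
  then have "AE \<omega> in M. \<forall>v. \<omega> \<notin> (\<Inter>n. E v n)"
    by (simp add: AE_all_countable)
  then show ?thesis
  proof (rule AE_mp, intro AE_I2 impI allI)
    fix \<omega> v assume \<omega>: "\<omega> \<in> space M" and H: "\<forall>v. \<omega> \<notin> (\<Inter>n. E v n)"
    then obtain n where n: "\<omega> \<notin> E v n" by blast
    show "\<exists>n. \<not>(\<exists>xs. length xs = n \<and> (\<forall>k<n. v @ take (Suc k) xs \<in> gw_vertices \<kappa> \<and> 0 < N (v @ take (Suc k) xs) \<omega> (box (v @ take (Suc k) xs))))"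
      using n \<omega> by (auto simp: E_def Bs_def A_def V_def)
  qed
qed

definition subtree :: "nat list \<Rightarrow> nat list set" where
  "subtree u = range ((@) u)"

lemma subtree_self[simp]: "u \<in> subtree u" by (auto simp: subtree_def intro: image_eqI[of _ _ "[]"])

lemma subtree_child: "subtree (u @ [i]) \<subseteq> subtree u" by (auto simp: subtree_def)

lemma not_in_subtree_child: "u \<notin> subtree (u @ [i])" by (auto simp: subtree_def)

lemma Fq_local: "(\<And>w. w \<in> subtree u \<Longrightarrow> \<kappa> w = \<kappa>' w) \<Longrightarrow> Fq q n u \<kappa> = Fq q n u \<kappa>'"
proof (induction n arbitrary: u)
  case 0 then show ?case by simp
next
  case (Suc n)
  have c: "u @ [i] \<in> subtree u" for i by (auto simp: subtree_def)
  have "Fq q n (u @ [i]) \<kappa> = Fq q n (u @ [i]) \<kappa>'" for i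
    using Suc.IH[of "u @ [i]"] Suc.prems subtree_child by blast
  then show ?case using Suc.prems c by simp
qed

lemma Fq_meas: "subtree u \<subseteq> S \<Longrightarrow> Fq q n u \<in> borel_measurable (Pi\<^sub>M S (\<lambda>_. count_space UNIV))"
proof (induction n arbitrary: u)
  case 0 then show ?case by simp
next
  case (Suc n)
  have c: "u @ [i] \<in> S" for i using Suc.prems by (auto simp: subtree_def)
  have uS: "u \<in> S" using Suc.prems by auto
  have comp: "(\<lambda>\<kappa>. f (\<kappa> w)) \<in> borel_measurable (Pi\<^sub>M S (\<lambda>_. count_space UNIV))" if "w \<in> S"
    for w and f :: "nat \<Rightarrow> ennreal"
    using measurable_compose[OF measurable_component_singleton[OF that, of "\<lambda>_. count_space (UNIV :: nat set)"],
        of f borel] by simp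
  have IH: "Fq q n (u @ [i]) \<in> borel_measurable (Pi\<^sub>M S (\<lambda>_. count_space UNIV))" for i
    using Suc.IH[of "u @ [i]"] Suc.prems subtree_child by blast
  show ?case
    unfolding Fq.simps
  proof (rule borel_measurable_suminf_order)
    fix i :: nat
    have a: "(\<lambda>\<kappa>. (if i < \<kappa> u then 1 else 0 :: ennreal)) \<in> borel_measurable (Pi\<^sub>M S (\<lambda>_. count_space UNIV))"
      using comp[OF uS, of "\<lambda>x. if i < x then 1 else 0"] by simp
    have b: "(\<lambda>\<kappa>. q (\<kappa> (u @ [i]))) \<in> borel_measurable (Pi\<^sub>M S (\<lambda>_. count_space UNIV))"
      using comp[OF c, of q] by simp
    show "(\<lambda>\<kappa>. (if i < \<kappa> u then 1 else 0) * (q (\<kappa> (u @ [i])) * Fq q n (u @ [i]) \<kappa>))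
        \<in> borel_measurable (Pi\<^sub>M S (\<lambda>_. count_space UNIV))"
      by (intro borel_measurable_times_ennreal a b IH)
  qed
qed

lemma (in prob_space) indep_var_nn_integral_mult:
  fixes X Y :: "'a \<Rightarrow> ennreal"
  assumes "indep_var borel X borel Y"
  shows "(\<integral>\<^sup>+\<omega>. X \<omega> * Y \<omega> \<partial>M) = (\<integral>\<^sup>+\<omega>. X \<omega> \<partial>M) * (\<integral>\<^sup>+\<omega>. Y \<omega> \<partial>M)"
proof -
  have cb: "case_bool (borel :: ennreal measure) borel = (\<lambda>_. borel)" by (auto simp: fun_eq_iff split: bool.split)
  have "indep_vars (\<lambda>_. borel) (case_bool X Y) UNIV"
    using assms unfolding indep_var_def cb .
  from indep_vars_nn_integral[OF _ this]
  have "(\<integral>\<^sup>+\<omega>. (\<Prod>i\<in>UNIV. case_bool X Y i \<omega>) \<partial>M) = (\<Prod>i\<in>UNIV. \<integral>\<^sup>+\<omega>. case_bool X Y i \<omega> \<partial>M)"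
    by simp
  moreover have "\<And>\<omega>. (\<Prod>i\<in>UNIV. case_bool X Y i \<omega>) = X \<omega> * Y \<omega>"
    by (simp add: UNIV_bool mult.commute)
  moreover have "(\<Prod>i\<in>UNIV. \<integral>\<^sup>+\<omega>. case_bool X Y i \<omega> \<partial>M) = (\<integral>\<^sup>+\<omega>. X \<omega> \<partial>M) * (\<integral>\<^sup>+\<omega>. Y \<omega> \<partial>M)"
    by (simp add: UNIV_bool mult.commute)
  ultimately show ?thesis by simp
qed

lemma sum_ind: "(\<Sum>i. c * (if i < x then 1 else 0 :: ennreal)) = c * of_nat x"
proof -
  have "(\<Sum>i. c * (if i < x then 1 else 0 :: ennreal)) = (\<Sum>i\<in>{..<x}. c * (if i < x then 1 else 0))"
    by (rule suminf_finite) auto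
  also have "\<dots> = (\<Sum>i\<in>{..<x}. c)" by simp
  finally show ?thesis by (simp add: mult.commute)
qed

lemma sum_ind1: "(\<Sum>i. (if i < x then 1 else 0 :: ennreal)) = of_nat x"
  using sum_ind[of 1 x] by simp

lemma distr_K:
  assumes U: "UGW_offspring P \<rho> K"
  shows "(\<integral>\<^sup>+\<omega>. f (K u \<omega>) \<partial>P) = (\<Sum>k. f k * ennreal (measure P {\<omega>\<in>space P. K u \<omega> = k}))"
proof -
  interpret prob_space P using U by (simp add: UGW_offspring_def)
  have Km: "K u \<in> measurable P (count_space UNIV)" using U by (simp add: UGW_offspring_def)
  have ev: "{\<omega>\<in>space P. K u \<omega> = k} \<in> sets P" for k
  proof -
    have "K u -` {k} \<inter> space P \<in> sets P" by (rule measurable_sets[OF Km]) auto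
    moreover have "K u -` {k} \<inter> space P = {\<omega>\<in>space P. K u \<omega> = k}" by auto
    ultimately show ?thesis by simp
  qed
  have "(\<integral>\<^sup>+\<omega>. f (K u \<omega>) \<partial>P) = (\<integral>\<^sup>+\<omega>. (\<Sum>k. f k * indicator {\<omega>\<in>space P. K u \<omega> = k} \<omega>) \<partial>P)"
  proof (rule nn_integral_cong)
    fix \<omega> assume \<omega>: "\<omega> \<in> space P"
    have "(\<Sum>k. f k * indicator {\<omega>\<in>space P. K u \<omega> = k} \<omega>) = (\<Sum>k\<in>{K u \<omega>}. f k * indicator {\<omega>\<in>space P. K u \<omega> = k} \<omega>)"
      by (rule suminf_finite) (auto simp: indicator_def)
    then show "f (K u \<omega>) = (\<Sum>k. f k * indicator {\<omega>\<in>space P. K u \<omega> = k} \<omega>)" using \<omega> by simp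
  qed
  also have "\<dots> = (\<Sum>k. \<integral>\<^sup>+\<omega>. f k * indicator {\<omega>\<in>space P. K u \<omega> = k} \<omega> \<partial>P)"
    by (rule nn_integral_suminf) (use ev in auto)
  also have "\<dots> = (\<Sum>k. f k * ennreal (measure P {\<omega>\<in>space P. K u \<omega> = k}))"
    using ev by (simp add: nn_integral_cmult_indicator emeasure_eq_measure)
  finally show ?thesis .
qed

lemma annealed:
  fixes P :: "'p measure" and K :: "nat list \<Rightarrow> 'p \<Rightarrow> nat" and q :: "nat \<Rightarrow> ennreal"
  assumes U: "UGW_offspring P \<rho> K"
    and q1: "\<And>k. q k \<le> 1"
    and m1: "(\<Sum>k. q k * of_nat k * ennreal (hat_rho \<rho> k)) < 1"
    and EK: "\<And>v. (\<integral>\<^sup>+\<omega>. of_nat (K v \<omega>) \<partial>P) < \<infinity>"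
  shows "AE \<omega> in P. \<forall>v. (\<Sum>n. Fq q n v (\<lambda>w. K w \<omega>)) < \<infinity>"
proof -
  interpret prob_space P using U by (simp add: UGW_offspring_def)
  define m where "m = (\<Sum>k. q k * of_nat k * ennreal (hat_rho \<rho> k))"
  have Km: "\<And>v. K v \<in> measurable P (count_space UNIV)" using U by (simp add: UGW_offspring_def)
  have ind: "indep_vars (\<lambda>_. count_space UNIV) K UNIV" using U by (simp add: UGW_offspring_def)
  have law: "\<And>v k. v \<noteq> [] \<Longrightarrow> measure P {\<omega>\<in>space P. K v \<omega> = k} = hat_rho \<rho> k"
    using U by (simp add: UGW_offspring_def)
  have RV: "(\<lambda>\<omega>. \<lambda>w\<in>S. K w \<omega>) \<in> measurable P (Pi\<^sub>M S (\<lambda>_. count_space UNIV))" for S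
    by (rule measurable_restrict) (rule Km)
  have Fm: "(\<lambda>\<omega>. Fq q n u (\<lambda>w. K w \<omega>)) \<in> borel_measurable P" for n u
    using measurable_compose[OF RV[of UNIV] Fq_meas[of u UNIV q n]] by (simp add: restrict_def)
  have fK: "(\<lambda>\<omega>. f (K v \<omega>)) \<in> borel_measurable P" for v and f :: "nat \<Rightarrow> ennreal"
    using measurable_compose[OF Km[of v], of f borel] by simp
  have split: "(\<integral>\<^sup>+\<omega>. f (K u \<omega>) * (q (K (u @ [i]) \<omega>) * Fq q n (u @ [i]) (\<lambda>w. K w \<omega>)) \<partial>P)
      = (\<integral>\<^sup>+\<omega>. f (K u \<omega>) \<partial>P) * (\<integral>\<^sup>+\<omega>. q (K (u @ [i]) \<omega>) * Fq q n (u @ [i]) (\<lambda>w. K w \<omega>) \<partial>P)"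
    for u i n and f :: "nat \<Rightarrow> ennreal"
  proof -
    define B where "B = subtree (u @ [i])"
    have iv: "indep_var (Pi\<^sub>M {u} (\<lambda>_. count_space UNIV)) (\<lambda>\<omega>. restrict (\<lambda>w. K w \<omega>) {u})
        (Pi\<^sub>M B (\<lambda>_. count_space UNIV)) (\<lambda>\<omega>. restrict (\<lambda>w. K w \<omega>) B)"
      by (rule indep_var_restrict[OF ind]) (auto simp: B_def not_in_subtree_child)
    have Y1: "(\<lambda>\<kappa>. f (\<kappa> u)) \<in> borel_measurable (Pi\<^sub>M {u} (\<lambda>_. count_space (UNIV :: nat set)))"
      using measurable_compose[OF measurable_component_singleton[of u "{u}" "\<lambda>_. count_space (UNIV :: nat set)"], of f borel]
      by simp
    have uiB: "u @ [i] \<in> B" by (simp add: B_def)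
    have Y2a: "(\<lambda>\<kappa>. q (\<kappa> (u @ [i]))) \<in> borel_measurable (Pi\<^sub>M B (\<lambda>_. count_space (UNIV :: nat set)))"
      using measurable_compose[OF measurable_component_singleton[OF uiB, of "\<lambda>_. count_space (UNIV :: nat set)"], of q borel]
      by simp
    have Y2: "(\<lambda>\<kappa>. q (\<kappa> (u @ [i])) * Fq q n (u @ [i]) \<kappa>) \<in> borel_measurable (Pi\<^sub>M B (\<lambda>_. count_space (UNIV :: nat set)))"
      by (intro borel_measurable_times_ennreal Y2a Fq_meas) (simp add: B_def)
    have iv2: "indep_var borel ((\<lambda>\<kappa>. f (\<kappa> u)) \<circ> (\<lambda>\<omega>. restrict (\<lambda>w. K w \<omega>) {u}))
       borel ((\<lambda>\<kappa>. q (\<kappa> (u @ [i])) * Fq q n (u @ [i]) \<kappa>) \<circ> (\<lambda>\<omega>. restrict (\<lambda>w. K w \<omega>) B))"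
      by (rule indep_var_compose[OF iv Y1 Y2])
    have e1: "(\<lambda>\<kappa>. f (\<kappa> u)) \<circ> (\<lambda>\<omega>. restrict (\<lambda>w. K w \<omega>) {u}) = (\<lambda>\<omega>. f (K u \<omega>))"
      by (simp add: fun_eq_iff)
    have e2: "(\<lambda>\<kappa>. q (\<kappa> (u @ [i])) * Fq q n (u @ [i]) \<kappa>) \<circ> (\<lambda>\<omega>. restrict (\<lambda>w. K w \<omega>) B)
       = (\<lambda>\<omega>. q (K (u @ [i]) \<omega>) * Fq q n (u @ [i]) (\<lambda>w. K w \<omega>))"
    proof (rule ext)
      fix \<omega>
      have "Fq q n (u @ [i]) (restrict (\<lambda>w. K w \<omega>) B) = Fq q n (u @ [i]) (\<lambda>w. K w \<omega>)"
        by (rule Fq_local) (simp add: B_def)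
      then show "((\<lambda>\<kappa>. q (\<kappa> (u @ [i])) * Fq q n (u @ [i]) \<kappa>) \<circ> (\<lambda>\<omega>. restrict (\<lambda>w. K w \<omega>) B)) \<omega>
         = q (K (u @ [i]) \<omega>) * Fq q n (u @ [i]) (\<lambda>w. K w \<omega>)"
        using uiB by simp
    qed
    show ?thesis using indep_var_nn_integral_mult[OF iv2[unfolded e1 e2]] .
  qed
  have Gm: "(\<lambda>\<omega>. q (K u \<omega>) * Fq q n u (\<lambda>w. K w \<omega>)) \<in> borel_measurable P" for u n
    by (intro borel_measurable_times_ennreal fK Fm)
  have mK: "(\<integral>\<^sup>+\<omega>. q (K u \<omega>) * of_nat (K u \<omega>) \<partial>P) = m" if "u \<noteq> []" for u
    using distr_K[OF U, of "\<lambda>k. q k * of_nat k" u] law[OF that] by (simp add: m_def)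
  have EG: "(\<integral>\<^sup>+\<omega>. q (K u \<omega>) * Fq q n u (\<lambda>w. K w \<omega>) \<partial>P) \<le> m ^ n" if "u \<noteq> []" for u n
    using that
  proof (induction n arbitrary: u)
    case 0
    have "(\<integral>\<^sup>+\<omega>. q (K u \<omega>) * Fq q 0 u (\<lambda>w. K w \<omega>) \<partial>P) \<le> (\<integral>\<^sup>+\<omega>. 1 \<partial>P)"
      by (rule nn_integral_mono) (simp add: q1)
    then show ?case by (simp add: emeasure_space_1)
  next
    case (Suc n)
    have eq: "q (K u \<omega>) * Fq q (Suc n) u (\<lambda>w. K w \<omega>)
      = (\<Sum>i. (q (K u \<omega>) * (if i < K u \<omega> then 1 else 0)) * (q (K (u @ [i]) \<omega>) * Fq q n (u @ [i]) (\<lambda>w. K w \<omega>)))" for \<omega>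
      by (simp add: ennreal_suminf_cmult[symmetric] mult.assoc del: ennreal_suminf_cmult)
    have "(\<integral>\<^sup>+\<omega>. q (K u \<omega>) * Fq q (Suc n) u (\<lambda>w. K w \<omega>) \<partial>P)
       = (\<Sum>i. \<integral>\<^sup>+\<omega>. (q (K u \<omega>) * (if i < K u \<omega> then 1 else 0)) * (q (K (u @ [i]) \<omega>) * Fq q n (u @ [i]) (\<lambda>w. K w \<omega>)) \<partial>P)"
      unfolding eq
      by (rule nn_integral_suminf) (intro borel_measurable_times_ennreal fK Gm)
    also have "\<dots> = (\<Sum>i. (\<integral>\<^sup>+\<omega>. q (K u \<omega>) * (if i < K u \<omega> then 1 else 0) \<partial>P) * (\<integral>\<^sup>+\<omega>. q (K (u @ [i]) \<omega>) * Fq q n (u @ [i]) (\<lambda>w. K w \<omega>) \<partial>P))"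
      by (intro suminf_cong split)
    also have "\<dots> \<le> (\<Sum>i. (\<integral>\<^sup>+\<omega>. q (K u \<omega>) * (if i < K u \<omega> then 1 else 0) \<partial>P) * m ^ n)"
      by (intro suminf_le summableI mult_left_mono Suc.IH) auto
    also have "\<dots> = (\<Sum>i. (\<integral>\<^sup>+\<omega>. q (K u \<omega>) * (if i < K u \<omega> then 1 else 0) \<partial>P)) * m ^ n"
      by simp
    also have "(\<Sum>i. (\<integral>\<^sup>+\<omega>. q (K u \<omega>) * (if i < K u \<omega> then 1 else 0) \<partial>P))
        = (\<integral>\<^sup>+\<omega>. (\<Sum>i. q (K u \<omega>) * (if i < K u \<omega> then 1 else 0)) \<partial>P)"
      by (rule nn_integral_suminf[symmetric]) (rule fK)
    also have "\<dots> = (\<integral>\<^sup>+\<omega>. q (K u \<omega>) * of_nat (K u \<omega>) \<partial>P)"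
      by (simp only: sum_ind)
    also have "\<dots> = m" using mK[OF Suc.prems] .
    finally show ?case by (simp add: mult.commute)
  qed
  have EF: "(\<integral>\<^sup>+\<omega>. Fq q (Suc n) v (\<lambda>w. K w \<omega>) \<partial>P) \<le> (\<integral>\<^sup>+\<omega>. of_nat (K v \<omega>) \<partial>P) * m ^ n" for v n
  proof -
    have "(\<integral>\<^sup>+\<omega>. Fq q (Suc n) v (\<lambda>w. K w \<omega>) \<partial>P)
       = (\<Sum>i. \<integral>\<^sup>+\<omega>. (if i < K v \<omega> then 1 else 0) * (q (K (v @ [i]) \<omega>) * Fq q n (v @ [i]) (\<lambda>w. K w \<omega>)) \<partial>P)"
      unfolding Fq.simps
      by (rule nn_integral_suminf) (intro borel_measurable_times_ennreal fK Gm)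
    also have "\<dots> = (\<Sum>i. (\<integral>\<^sup>+\<omega>. (if i < K v \<omega> then 1 else 0) \<partial>P) * (\<integral>\<^sup>+\<omega>. q (K (v @ [i]) \<omega>) * Fq q n (v @ [i]) (\<lambda>w. K w \<omega>) \<partial>P))"
      by (intro suminf_cong split)
    also have "\<dots> \<le> (\<Sum>i. (\<integral>\<^sup>+\<omega>. (if i < K v \<omega> then 1 else 0) \<partial>P) * m ^ n)"
      by (intro suminf_le summableI mult_left_mono EG) auto
    also have "\<dots> = (\<Sum>i. (\<integral>\<^sup>+\<omega>. (if i < K v \<omega> then 1 else 0) \<partial>P)) * m ^ n"
      by simp
    also have "(\<Sum>i. (\<integral>\<^sup>+\<omega>. (if i < K v \<omega> then 1 else 0) \<partial>P))
        = (\<integral>\<^sup>+\<omega>. (\<Sum>i. (if i < K v \<omega> then 1 else 0)) \<partial>P)"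
      by (rule nn_integral_suminf[symmetric]) (rule fK)
    also have "\<dots> = (\<integral>\<^sup>+\<omega>. of_nat (K v \<omega>) \<partial>P)"
      by (simp only: sum_ind1)
    finally show ?thesis by simp
  qed
  obtain mr where mr: "m = ennreal mr" "0 \<le> mr" "mr < 1"
    using m1 unfolding m_def[symmetric]
    by (cases m) (auto simp: ennreal_less_iff)
  have geo: "(\<Sum>n. m ^ n) < \<infinity>"
  proof -
    have "(\<Sum>n. m ^ n) = (\<Sum>n. ennreal (mr ^ n))" using mr by (simp add: ennreal_power)
    also have "\<dots> \<noteq> \<top>" by (rule ennreal_suminf_neq_top) (use mr in auto)
    finally show ?thesis by (simp add: less_top)
  qed
  have fin: "(\<integral>\<^sup>+\<omega>. (\<Sum>n. Fq q n v (\<lambda>w. K w \<omega>)) \<partial>P) < \<infinity>" for v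
  proof -
    have "(\<integral>\<^sup>+\<omega>. (\<Sum>n. Fq q n v (\<lambda>w. K w \<omega>)) \<partial>P) = (\<Sum>n. \<integral>\<^sup>+\<omega>. Fq q n v (\<lambda>w. K w \<omega>) \<partial>P)"
      by (rule nn_integral_suminf) (rule Fm)
    also have "\<dots> = (\<Sum>n. \<integral>\<^sup>+\<omega>. Fq q (n + 1) v (\<lambda>w. K w \<omega>) \<partial>P) + (\<Sum>j<1. \<integral>\<^sup>+\<omega>. Fq q j v (\<lambda>w. K w \<omega>) \<partial>P)"
      by (rule suminf_offset) (rule summableI)
    also have "\<dots> \<le> (\<Sum>n. (\<integral>\<^sup>+\<omega>. of_nat (K v \<omega>) \<partial>P) * m ^ n) + 1"
      by (intro add_mono suminf_le summableI) (use EF in \<open>auto simp: emeasure_space_1\<close>)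
    also have "\<dots> = (\<integral>\<^sup>+\<omega>. of_nat (K v \<omega>) \<partial>P) * (\<Sum>n. m ^ n) + 1"
      by simp
    also have "\<dots> < \<infinity>" using EK[of v] geo by (simp add: ennreal_mult_less_top less_top)
    finally show ?thesis .
  qed
  have "AE \<omega> in P. (\<Sum>n. Fq q n v (\<lambda>w. K w \<omega>)) \<noteq> \<infinity>" for v
    by (rule nn_integral_PInf_AE) (use fin[of v] Fm in auto)
  then have "AE \<omega> in P. \<forall>v. (\<Sum>n. Fq q n v (\<lambda>w. K w \<omega>)) \<noteq> \<infinity>"
    by (simp add: AE_all_countable)
  then show ?thesis by (simp add: less_top)
qed

lemma one_minus_exp_le: "0 \<le> (x::real) \<Longrightarrow> 1 - exp (- x) \<le> x"
  using exp_ge_add_one_self[of "-x"] by simp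

lemma one_minus_exp_bounds: "0 \<le> (x::real) \<Longrightarrow> 0 \<le> 1 - exp (- x) \<and> 1 - exp (- x) \<le> 1"
  by auto

lemma choose_delta:
  fixes a c :: "nat \<Rightarrow> real"
  assumes sa: "summable a" and a0: "\<And>k. 0 \<le> a k" and c0: "\<And>k. 0 \<le> c k"
    and cm: "\<And>k k'. k \<le> k' \<Longrightarrow> c k \<le> c k'" and T: "0 < T"
  shows "\<exists>\<Delta>. 0 < \<Delta> \<and> \<Delta> \<le> T \<and> summable (\<lambda>k. (1 - exp (- (\<Delta> * c k))) * a k)
     \<and> (\<Sum>k. (1 - exp (- (\<Delta> * c k))) * a k) < 1"
proof -
  obtain N where N: "\<And>n. n \<ge> N \<Longrightarrow> norm (\<Sum>i. a (i + n)) < 1/2"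
    using suminf_exist_split[OF _ sa, of "1/2"] by auto
  define A where "A = suminf a"
  have A0: "0 \<le> A" unfolding A_def using sa a0 by (rule suminf_nonneg)
  define L where "L = c N"
  have L0: "0 \<le> L" using c0 by (simp add: L_def)
  define \<Delta> where "\<Delta> = min T (1 / (4 * (L * A + 1)))"
  have LA: "0 \<le> L * A" using L0 A0 by simp
  have D0: "0 < \<Delta>" using T LA by (simp add: \<Delta>_def)
  have DT: "\<Delta> \<le> T" by (simp add: \<Delta>_def)
  define b where "b k = (1 - exp (- (\<Delta> * c k))) * a k" for k
  have b0: "0 \<le> b k" and ba: "b k \<le> a k" for k
  proof -
    have "0 \<le> \<Delta> * c k" using D0 c0[of k] by simp
    from one_minus_exp_bounds[OF this] show "0 \<le> b k" "b k \<le> a k"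
      using a0[of k] by (auto simp: b_def intro: mult_nonneg_nonneg mult_left_le_one_le)
  qed
  have sb: "summable b"
    by (rule summable_comparison_test'[OF sa]) (use b0 ba in auto)
  have "suminf b = (\<Sum>n. b (n + N)) + (\<Sum>i<N. b i)"
    by (rule suminf_split_initial_segment[OF sb])
  also have "(\<Sum>n. b (n + N)) \<le> (\<Sum>n. a (n + N))"
    by (intro suminf_le summable_ignore_initial_segment sb sa ba)
  also have "(\<Sum>n. a (n + N)) < 1/2" using N[of N] by simp
  also have "(\<Sum>i<N. b i) \<le> (\<Sum>i<N. \<Delta> * L * a i)"
  proof (rule sum_mono)
    fix i assume "i \<in> {..<N}"
    then have "c i \<le> L" using cm[of i N] by (simp add: L_def)
    have "1 - exp (- (\<Delta> * c i)) \<le> \<Delta> * c i" using D0 c0[of i] by (intro one_minus_exp_le) simp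
    also have "\<dots> \<le> \<Delta> * L" using \<open>c i \<le> L\<close> D0 by simp
    finally show "b i \<le> \<Delta> * L * a i" unfolding b_def using a0[of i] by (rule mult_right_mono)
  qed
  also have "\<dots> = \<Delta> * L * (\<Sum>i<N. a i)" by (simp add: sum_distrib_left)
  also have "\<dots> \<le> \<Delta> * L * A" unfolding A_def
    using D0 L0 by (intro mult_left_mono sum_le_suminf sa) (auto simp: a0)
  also have "\<Delta> * L * A \<le> 1/4"
  proof -
    have "\<Delta> * (L * A) \<le> (1 / (4 * (L * A + 1))) * (L * A)"
      using LA by (intro mult_right_mono) (auto simp: \<Delta>_def)
    also have "\<dots> \<le> 1/4" using LA by (simp add: field_simps)
    finally show ?thesis by (simp add: mult.assoc)
  qed
  finally have "suminf b < 1" by simp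
  then show ?thesis using D0 DT sb unfolding b_def by blast
qed

lemma summable_mean:
  assumes "summable (\<lambda>n. (real n)\<^sup>2 * pmf \<rho> n)"
  shows "summable (\<lambda>n. real n * pmf \<rho> n)"
proof (rule summable_comparison_test'[OF assms, of 0])
  fix n :: nat
  have "real n \<le> real n * real n" by (cases n) auto
  then show "norm (real n * pmf \<rho> n) \<le> (real n)\<^sup>2 * pmf \<rho> n"
    by (auto simp: power2_eq_square intro!: mult_right_mono pmf_nonneg)
qed

lemma pmf_mean_nonneg: "summable (\<lambda>n. (real n)\<^sup>2 * pmf \<rho> n) \<Longrightarrow> 0 \<le> pmf_mean \<rho>"
  unfolding pmf_mean_def by (rule suminf_nonneg) (auto simp: pmf_nonneg summable_mean)

lemma hat_nonneg: "summable (\<lambda>n. (real n)\<^sup>2 * pmf \<rho> n) \<Longrightarrow> 0 \<le> hat_rho \<rho> k"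
  using pmf_mean_nonneg[of \<rho>] by (auto simp: hat_rho_def pmf_nonneg)

lemma summable_hat:
  assumes s2: "summable (\<lambda>n. (real n)\<^sup>2 * pmf \<rho> n)"
  shows "summable (\<lambda>k. real k * hat_rho \<rho> k)"
proof (cases "pmf_mean \<rho> = 0")
  case True
  have "(\<lambda>k. real k * hat_rho \<rho> k) = (\<lambda>k. 0)" using True by (auto simp: hat_rho_def fun_eq_iff)
  then show ?thesis by simp
next
  case False
  have s2': "summable (\<lambda>k. (real (Suc k))\<^sup>2 * pmf \<rho> (Suc k))"
    using summable_ignore_initial_segment[OF s2, of 1] by simp
  have "summable (\<lambda>k. (real (Suc k))\<^sup>2 * pmf \<rho> (Suc k) / pmf_mean \<rho>)"
    by (rule summable_divide[OF s2'])
  then show ?thesis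
  proof (rule summable_comparison_test'[of _ 0])
    fix k :: nat
    have m: "0 < pmf_mean \<rho>" using False pmf_mean_nonneg[of \<rho>] s2 by simp
    have "real k * (real (k + 1) * pmf \<rho> (k + 1)) \<le> (real (Suc k))\<^sup>2 * pmf \<rho> (Suc k)"
      by (auto simp: power2_eq_square intro!: mult_right_mono pmf_nonneg)
    then show "norm (real k * hat_rho \<rho> k) \<le> (real (Suc k))\<^sup>2 * pmf \<rho> (Suc k) / pmf_mean \<rho>"
      using m False hat_nonneg[of \<rho> k] s2
      by (simp add: hat_rho_def divide_right_mono)
  qed
qed

lemma EK_finite:
  assumes U: "UGW_offspring P \<rho> K" and s2: "summable (\<lambda>n. (real n)\<^sup>2 * pmf \<rho> n)"
  shows "(\<integral>\<^sup>+\<omega>. of_nat (K v \<omega>) \<partial>P) < \<infinity>"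
proof -
  have "(\<integral>\<^sup>+\<omega>. of_nat (K v \<omega>) \<partial>P) = (\<Sum>k. of_nat k * ennreal (measure P {\<omega>\<in>space P. K v \<omega> = k}))"
    by (rule distr_K[OF U])
  also have "\<dots> = (\<Sum>k. ennreal (real k * measure P {\<omega>\<in>space P. K v \<omega> = k}))"
    by (simp add: ennreal_mult ennreal_of_nat_eq_real_of_nat)
  also have "\<dots> \<noteq> \<top>"
  proof (cases "v = []")
    case True
    have "measure P {\<omega>\<in>space P. K v \<omega> = k} = pmf \<rho> k" for k
      using U True by (simp add: UGW_offspring_def)
    then show ?thesis using summable_mean[OF s2]
      by (simp add: ennreal_suminf_neq_top pmf_nonneg)
  next
    case False
    have "measure P {\<omega>\<in>space P. K v \<omega> = k} = hat_rho \<rho> k" for k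
      using U False by (simp add: UGW_offspring_def)
    then show ?thesis using summable_hat[OF s2]
      by (simp add: ennreal_suminf_neq_top hat_nonneg[OF s2])
  qed
  finally show ?thesis by (simp add: less_top)
qed

lemma intensity_box:
  assumes fm: "finite_measure \<sigma>" and Js: "J \<in> sets \<sigma>" and a: "0 \<le> a" and b: "0 \<le> b"
  shows "(({0<..a} \<times> {0<..b}) \<times> J) \<in> sets (intensity \<sigma>)"
    and "emeasure (intensity \<sigma>) (({0<..a} \<times> {0<..b}) \<times> J) = ennreal (a * b) * emeasure \<sigma> J"
proof -
  let ?L = "lborel \<Otimes>\<^sub>M lborel :: (real \<times> real) measure"
  let ?\<Omega> = "{0::real..} \<times> {0::real..}"
  have \<Omega>: "?\<Omega> \<inter> space ?L \<in> sets ?L" by (simp add: pair_measureI)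
  have As: "{0<..a} \<times> {0<..b} \<in> sets (restrict_space ?L ?\<Omega>)"
    by (subst sets_restrict_space_iff[OF \<Omega>]) (auto simp: pair_measureI)
  then show "(({0<..a} \<times> {0<..b}) \<times> J) \<in> sets (intensity \<sigma>)"
    unfolding intensity_def by (intro pair_measureI Js)
  have sf: "sigma_finite_measure \<sigma>"
  proof -
    interpret finite_measure \<sigma> by (rule fm)
    show ?thesis by unfold_locales
  qed
  have "emeasure (intensity \<sigma>) (({0<..a} \<times> {0<..b}) \<times> J)
      = emeasure (restrict_space ?L ?\<Omega>) ({0<..a} \<times> {0<..b}) * emeasure \<sigma> J"
    unfolding intensity_def by (rule sigma_finite_measure.emeasure_pair_measure_Times[OF sf As Js])
  also have "emeasure (restrict_space ?L ?\<Omega>) ({0<..a} \<times> {0<..b}) = emeasure ?L ({0<..a} \<times> {0<..b})"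
    by (rule emeasure_restrict_space[OF \<Omega>]) auto
  also have "\<dots> = emeasure lborel {0<..a} * emeasure lborel {0<..b}"
    by (rule sigma_finite_measure.emeasure_pair_measure_Times[OF sigma_finite_lborel]) auto
  also have "\<dots> = ennreal (a * b)" using a b by (simp add: ennreal_mult)
  finally show "emeasure (intensity \<sigma>) (({0<..a} \<times> {0<..b}) \<times> J) = ennreal (a * b) * emeasure \<sigma> J" .
qed

theorem mainTheorem10:
  fixes \<rho> :: "nat pmf"
    and P :: "'p measure"
    and K :: "nat list \<Rightarrow> 'p \<Rightarrow> nat"
    and J :: "'j set"
    and \<sigma> :: "'j measure"
    and C :: "nat \<Rightarrow> real \<Rightarrow> real"
  assumes "summable (\<lambda>n. (real n)\<^sup>2 * pmf \<rho> n)"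
    and "UGW_offspring P \<rho> K"
    and "admissible_params J \<sigma> C"
  shows "AE \<omega> in P. finitely_dissociable TYPE('w) J \<sigma> C (gw_vertices (\<lambda>v. K v \<omega>)) tree_adj"
proof -
  note s2 = assms(1) and U = assms(2) and adm = assms(3)
  interpret prob_space P using U by (simp add: UGW_offspring_def)
  have sJ: "sets \<sigma> = Pow J" and fm: "finite_measure \<sigma>"
    and Cpos: "\<And>k T. 1 \<le> k \<Longrightarrow> 0 \<le> T \<Longrightarrow> 0 < C k T"
    and CmK: "\<And>k k' T. 1 \<le> k \<Longrightarrow> k \<le> k' \<Longrightarrow> 0 \<le> T \<Longrightarrow> C k T \<le> C k' T"
    and CmT: "\<And>k T T'. 1 \<le> k \<Longrightarrow> 0 \<le> T \<Longrightarrow> T \<le> T' \<Longrightarrow> C k T \<le> C k T'"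
    using adm unfolding admissible_params_def by blast+
  have Js: "J \<in> sets \<sigma>" using sJ by simp
  define s where "s = enn2real (emeasure \<sigma> J)"
  have s0: "0 \<le> s" by (simp add: s_def)
  have \<sigma>J: "emeasure \<sigma> J = ennreal s"
    using finite_measure.emeasure_finite[OF fm, of J] by (simp add: s_def ennreal_enn2real_if)
  define a where "a = (\<lambda>k. real k * hat_rho \<rho> k)"
  have a0: "0 \<le> a k" for k using hat_nonneg[OF s2] by (simp add: a_def)
  have sa: "summable a" using summable_hat[OF s2] by (simp add: a_def)
  have ex: "\<exists>\<Delta>. 0 < \<Delta> \<and> \<Delta> \<le> real (Suc n) \<and>
      summable (\<lambda>k. (1 - exp (- (\<Delta> * (C (k + 2) (real (Suc n)) * s)))) * a k) \<and>
      (\<Sum>k. (1 - exp (- (\<Delta> * (C (k + 2) (real (Suc n)) * s)))) * a k) < 1" for n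
  proof (rule choose_delta[OF sa a0])
    show "0 \<le> C (k + 2) (real (Suc n)) * s" for k
      using Cpos[of "k+2" "real (Suc n)"] s0 by simp
    show "C (k + 2) (real (Suc n)) * s \<le> C (k' + 2) (real (Suc n)) * s" if "k \<le> k'" for k k'
      using CmK[of "k+2" "k'+2" "real (Suc n)"] that s0 by (simp add: mult_right_mono)
  qed simp
  obtain D where D: "\<And>n. 0 < D n \<and> D n \<le> real (Suc n) \<and>
      summable (\<lambda>k. (1 - exp (- (D n * (C (k + 2) (real (Suc n)) * s)))) * a k) \<and>
      (\<Sum>k. (1 - exp (- (D n * (C (k + 2) (real (Suc n)) * s)))) * a k) < 1"
    using choice[of "\<lambda>n \<Delta>. 0 < \<Delta> \<and> \<Delta> \<le> real (Suc n) \<and>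
      summable (\<lambda>k. (1 - exp (- (\<Delta> * (C (k + 2) (real (Suc n)) * s)))) * a k) \<and>
      (\<Sum>k. (1 - exp (- (\<Delta> * (C (k + 2) (real (Suc n)) * s)))) * a k) < 1"] ex by blast
  define q where "q n k = ennreal (1 - exp (- (D n * (C (k + 2) (real (Suc n)) * s))))" for n k
  have arg0: "0 \<le> D n * (C (k + 2) (real (Suc n)) * s)" for n k
    using D[of n] Cpos[of "k+2" "real (Suc n)"] s0 by simp
  have q1: "q n k \<le> 1" for n k by (simp add: q_def)
  have m1: "(\<Sum>k. q n k * of_nat k * ennreal (hat_rho \<rho> k)) < 1" for n
  proof -
    have "(\<Sum>k. q n k * of_nat k * ennreal (hat_rho \<rho> k))
        = (\<Sum>k. ennreal ((1 - exp (- (D n * (C (k + 2) (real (Suc n)) * s)))) * a k))"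
    proof (rule suminf_cong)
      fix k
      have h0: "0 \<le> hat_rho \<rho> k" using hat_nonneg[OF s2] .
      have e0: "0 \<le> 1 - exp (- (D n * (C (k + 2) (real (Suc n)) * s)))" using arg0[of n k] by simp
      have "q n k * of_nat k * ennreal (hat_rho \<rho> k)
          = ennreal (1 - exp (- (D n * (C (k + 2) (real (Suc n)) * s)))) * ennreal (real k) * ennreal (hat_rho \<rho> k)"
        by (simp add: q_def ennreal_of_nat_eq_real_of_nat)
      also have "\<dots> = ennreal ((1 - exp (- (D n * (C (k + 2) (real (Suc n)) * s)))) * (real k * hat_rho \<rho> k))"
        using e0 h0 by (simp add: ennreal_mult mult.assoc)
      finally show "q n k * of_nat k * ennreal (hat_rho \<rho> k)
          = ennreal ((1 - exp (- (D n * (C (k + 2) (real (Suc n)) * s)))) * a k)" by (simp add: a_def)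
    qed
    also have "\<dots> = ennreal (\<Sum>k. (1 - exp (- (D n * (C (k + 2) (real (Suc n)) * s)))) * a k)"
      using D[of n] arg0 a0 by (intro suminf_ennreal2) auto
    also have "\<dots> < 1" using D[of n] by simp
    finally show ?thesis .
  qed
  have "AE \<omega> in P. \<forall>v. (\<Sum>j. Fq (q n) j v (\<lambda>w. K w \<omega>)) < \<infinity>" for n
    by (rule annealed[OF U q1 m1 EK_finite[OF U s2]])
  then have AEall: "AE \<omega> in P. \<forall>n v. (\<Sum>j. Fq (q n) j v (\<lambda>w. K w \<omega>)) < \<infinity>"
    by (simp add: AE_all_countable)
  then show ?thesis
  proof (rule eventually_mono)
    fix \<omega> assume H: "\<forall>n v. (\<Sum>j. Fq (q n) j v (\<lambda>w. K w \<omega>)) < \<infinity>"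
    define \<kappa> where "\<kappa> = (\<lambda>w. K w \<omega>)"
    have \<kappa>eq: "(\<lambda>v. K v \<omega>) = \<kappa>" by (simp add: \<kappa>_def)
    define V where "V = gw_vertices \<kappa>"
    show "finitely_dissociable TYPE('w) J \<sigma> C (gw_vertices (\<lambda>v. K v \<omega>)) tree_adj"
      unfolding finitely_dissociable_def \<kappa>eq
    proof (intro conjI allI impI)
      show "locally_finite (gw_vertices \<kappa>) tree_adj" by (rule gw_locally_finite)
      fix T :: real assume T: "0 < T"
      define n where "n = nat \<lceil>T\<rceil>"
      have Tn: "T \<le> real (Suc n)" unfolding n_def by linarith
      define \<Delta> where "\<Delta> = min T (D n)"
      have \<Delta>0: "0 < \<Delta>" using T D[of n] by (simp add: \<Delta>_def)
      show "\<exists>\<Delta>>0. \<Delta> \<le> T \<and> (\<forall>(M :: 'w measure) N. iid_PRMs M (intensity \<sigma>) (gw_vertices \<kappa>) N \<longrightarrow>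
           (AE \<omega> in M. all_components_finite (gw_vertices \<kappa>) tree_adj
              (active_set (gw_vertices \<kappa>) tree_adj J C T \<Delta> (\<lambda>v. N v \<omega>))))"
      proof (intro exI[of _ \<Delta>] conjI allI impI)
        show "0 < \<Delta>" by fact
        show "\<Delta> \<le> T" by (simp add: \<Delta>_def)
        fix M :: "'w measure" and N
        assume iid: "iid_PRMs M (intensity \<sigma>) (gw_vertices \<kappa>) N"
        define box where "box u = ({0<..\<Delta>} \<times> {0<..C (card (cl (gw_vertices \<kappa>) tree_adj u)) T}) \<times> J" for u
        have Cnn: "0 \<le> C (card (cl (gw_vertices \<kappa>) tree_adj u)) T" if "u \<in> gw_vertices \<kappa>" for u
          using Cpos[OF card_cl_ge[OF that], of T] T by simp
        have bm: "box u \<in> sets (intensity \<sigma>)"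
          and be: "emeasure (intensity \<sigma>) (box u) = ennreal (\<Delta> * C (card (cl (gw_vertices \<kappa>) tree_adj u)) T * s)"
          if "u \<in> gw_vertices \<kappa>" for u
          using intensity_box[OF fm Js, of \<Delta> "C (card (cl (gw_vertices \<kappa>) tree_adj u)) T"] \<Delta>0 Cnn[OF that] s0
          by (auto simp: box_def \<sigma>J ennreal_mult[symmetric])
        have boxes: "box u \<in> sets (intensity \<sigma>) \<and> emeasure (intensity \<sigma>) (box u) < \<infinity>"
          if "u \<in> gw_vertices \<kappa>" for u
          using bm[OF that] be[OF that] by simp
        have qb: "ennreal (1 - exp (- enn2real (emeasure (intensity \<sigma>) (box u)))) \<le> q n (\<kappa> u)"
          if u: "u \<in> gw_vertices \<kappa>" for u
        proof -
          have x0: "0 \<le> \<Delta> * C (card (cl (gw_vertices \<kappa>) tree_adj u)) T * s"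
            using \<Delta>0 Cnn[OF u] s0 by simp
          have "C (card (cl (gw_vertices \<kappa>) tree_adj u)) T \<le> C (\<kappa> u + 2) T"
            using CmK[OF card_cl_ge[OF u] card_cl_le[OF u], of T] T by simp
          also have "\<dots> \<le> C (\<kappa> u + 2) (real (Suc n))"
            using CmT[of "\<kappa> u + 2" T "real (Suc n)"] T Tn by simp
          finally have c1: "C (card (cl (gw_vertices \<kappa>) tree_adj u)) T \<le> C (\<kappa> u + 2) (real (Suc n))" .
          have "\<Delta> * C (card (cl (gw_vertices \<kappa>) tree_adj u)) T * s \<le> D n * (C (\<kappa> u + 2) (real (Suc n)) * s)"
          proof -
            have "\<Delta> * C (card (cl (gw_vertices \<kappa>) tree_adj u)) T \<le> D n * C (\<kappa> u + 2) (real (Suc n))"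
              using \<Delta>0 Cnn[OF u] c1 D[of n] by (intro mult_mono) (auto simp: \<Delta>_def)
            then show ?thesis using s0 by (simp add: mult_right_mono mult.assoc[symmetric])
          qed
          then have "1 - exp (- (\<Delta> * C (card (cl (gw_vertices \<kappa>) tree_adj u)) T * s))
              \<le> 1 - exp (- (D n * (C (\<kappa> u + 2) (real (Suc n)) * s)))" by simp
          then show ?thesis using be[OF u] x0 by (simp add: q_def ennreal_leI)
        qed
        have fin: "(\<Sum>j. Fq (q n) j v \<kappa>) < \<infinity>" for v using H by (simp add: \<kappa>_def)
        from quenched[OF iid boxes qb fin]
        show "AE \<omega> in M. all_components_finite (gw_vertices \<kappa>) tree_adj
              (active_set (gw_vertices \<kappa>) tree_adj J C T \<Delta> (\<lambda>v. N v \<omega>))"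
        proof (rule eventually_mono)
          fix \<omega>' assume Q: "\<forall>v. \<exists>n. \<not>(\<exists>xs. length xs = n \<and> (\<forall>k<n. v @ take (Suc k) xs \<in> gw_vertices \<kappa> \<and> 0 < N (v @ take (Suc k) xs) \<omega>' (box (v @ take (Suc k) xs))))"
          have Weq: "active_set (gw_vertices \<kappa>) tree_adj J C T \<Delta> (\<lambda>v. N v \<omega>') = {u \<in> gw_vertices \<kappa>. 0 < N u \<omega>' (box u)}"
            by (auto simp: active_set_def box_def)
          show "all_components_finite (gw_vertices \<kappa>) tree_adj (active_set (gw_vertices \<kappa>) tree_adj J C T \<Delta> (\<lambda>v. N v \<omega>'))"
            unfolding Weq
            by (rule comp_finite) (use Q in auto)
        qed
      qed
    qed
  qed
qed

end
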